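(* Let $p,q$ be relatively prime positive integers and let $P_0,P_1$ be relatively prime positive integers with $\min\{P_0,P_1\}\ge 2pq$. Then there exists a unital injective $*$-homomorphism from $I(p,q)$ into $I(P_0,P_1)$.
   Context: For relatively prime positive integers $p,q$, the dimension drop algebra $I(p,q)$ is $\{f\in C([0,1])\otimes M_{pq}: f(0)\in M_p\otimes 1_q,\ f(1)\in 1_p\otimes M_q\}$ (equivalently, functions on two copies of $[0,2\pi]$ glued at $0$, with these conditions at the two free endpoints). *)

theory Defs
  imports Complex_Main
begin

text \<open>Elements of C([0,1]) \<otimes> M_n are represented as functions
  f :: real \<Rightarrow> nat \<Rightarrow> nat \<Rightarrow> complex, (t, i, j) \<mapsto> (i,j)-entry of f(t),
  normalised to be 0 outside t \<in> [0,1] and outside indices i,j < n.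
  M_{pq} = M_p \<otimes> M_q with index (a,b) (a < p, b < q) encoded as a*q + b.\<close>

type_synonym matfun = "real \<Rightarrow> nat \<Rightarrow> nat \<Rightarrow> complex"

definition in_Mp_tensor_1q :: "nat \<Rightarrow> nat \<Rightarrow> (nat \<Rightarrow> nat \<Rightarrow> complex) \<Rightarrow> bool" where
  "in_Mp_tensor_1q p q M \<longleftrightarrow> (\<exists>A :: nat \<Rightarrow> nat \<Rightarrow> complex. \<forall>i<p*q. \<forall>j<p*q.
      M i j = A (i div q) (j div q) * (if i mod q = j mod q then 1 else 0))"

definition in_1p_tensor_Mq :: "nat \<Rightarrow> nat \<Rightarrow> (nat \<Rightarrow> nat \<Rightarrow> complex) \<Rightarrow> bool" where
  "in_1p_tensor_Mq p q M \<longleftrightarrow> (\<exists>B :: nat \<Rightarrow> nat \<Rightarrow> complex. \<forall>i<p*q. \<forall>j<p*q.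
      M i j = (if i div q = j div q then 1 else 0) * B (i mod q) (j mod q))"

definition dimdrop :: "nat \<Rightarrow> nat \<Rightarrow> matfun set" where
  "dimdrop p q = {f.
      (\<forall>i j. continuous_on {0..1} (\<lambda>t. f t i j)) \<and>
      (\<forall>t i j. (t \<notin> {0..1} \<or> p*q \<le> i \<or> p*q \<le> j) \<longrightarrow> f t i j = 0) \<and>
      in_Mp_tensor_1q p q (f 0) \<and> in_1p_tensor_Mq p q (f 1)}"

definition mf_mult :: "nat \<Rightarrow> matfun \<Rightarrow> matfun \<Rightarrow> matfun" where
  "mf_mult n f g = (\<lambda>t i j. \<Sum>k<n. f t i k * g t k j)"

definition mf_star :: "matfun \<Rightarrow> matfun" where
  "mf_star f = (\<lambda>t i j. cnj (f t j i))"

definition mf_add :: "matfun \<Rightarrow> matfun \<Rightarrow> matfun" where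
  "mf_add f g = (\<lambda>t i j. f t i j + g t i j)"

definition mf_scale :: "complex \<Rightarrow> matfun \<Rightarrow> matfun" where
  "mf_scale c f = (\<lambda>t i j. c * f t i j)"

definition mf_unit :: "nat \<Rightarrow> matfun" where
  "mf_unit n = (\<lambda>t i j. if t \<in> {0..1} \<and> i = j \<and> i < n then 1 else 0)"

definition unital_inj_star_hom :: "nat \<Rightarrow> nat \<Rightarrow> nat \<Rightarrow> nat \<Rightarrow> (matfun \<Rightarrow> matfun) \<Rightarrow> bool" where
  "unital_inj_star_hom p q P0 P1 \<phi> \<longleftrightarrow>
     (\<forall>f\<in>dimdrop p q. \<phi> f \<in> dimdrop P0 P1) \<and>
     (\<forall>f\<in>dimdrop p q. \<forall>g\<in>dimdrop p q. \<phi> (mf_add f g) = mf_add (\<phi> f) (\<phi> g)) \<and>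
     (\<forall>c. \<forall>f\<in>dimdrop p q. \<phi> (mf_scale c f) = mf_scale c (\<phi> f)) \<and>
     (\<forall>f\<in>dimdrop p q. \<forall>g\<in>dimdrop p q.
        \<phi> (mf_mult (p*q) f g) = mf_mult (P0*P1) (\<phi> f) (\<phi> g)) \<and>
     (\<forall>f\<in>dimdrop p q. \<phi> (mf_star f) = mf_star (\<phi> f)) \<and>
     \<phi> (mf_unit (p*q)) = mf_unit (P0*P1) \<and>
     inj_on \<phi> (dimdrop p q)"

end

theory Submission
  imports Defs "HOL-Number_Theory.Cong"
begin

definition mm :: "nat \<Rightarrow> (nat\<Rightarrow>nat\<Rightarrow>complex) \<Rightarrow> (nat\<Rightarrow>nat\<Rightarrow>complex) \<Rightarrow> nat\<Rightarrow>nat\<Rightarrow>complex" where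
 "mm n A B = (\<lambda>i j. \<Sum>k<n. A i k * B k j)"

lemma mm_assoc: "mm n (mm n A B) C = mm n A (mm n B C)"
proof (intro ext)
  fix i j
  have "mm n (mm n A B) C i j = (\<Sum>l<n. \<Sum>k<n. A i k * B k l * C l j)"
    by (simp add: mm_def sum_distrib_right)
  also have "\<dots> = (\<Sum>k<n. \<Sum>l<n. A i k * B k l * C l j)" by (rule sum.swap)
  also have "\<dots> = mm n A (mm n B C) i j"
    by (simp add: mm_def sum_distrib_left mult.assoc)
  finally show "mm n (mm n A B) C i j = mm n A (mm n B C) i j" .
qed

definition Wm :: "(nat\<Rightarrow>nat) \<Rightarrow> real \<Rightarrow> nat \<Rightarrow> nat \<Rightarrow> complex" where
 "Wm s t i k = of_real (cos (pi*t/2)) * (if k = i then 1 else 0) + \<i> * of_real (sin (pi*t/2)) * (if k = s i then 1 else 0)"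
definition Ws :: "(nat\<Rightarrow>nat) \<Rightarrow> real \<Rightarrow> nat \<Rightarrow> nat \<Rightarrow> complex" where
 "Ws s t k j = cnj (Wm s t j k)"

lemma sum_ind: "(a::nat) < n \<Longrightarrow> (\<Sum>k<n. (if k = a then x k else 0)) = x a"
  by (rule trans[OF sum.delta]) auto

lemma cs1: "(of_real (cos x))^2 + (of_real (sin x))^2 = (1::complex)"
  by (metis of_real_add of_real_power sin_cos_squared_add2 of_real_1 add.commute)

lemma WmWs:
  assumes inv: "\<And>i. i<n \<Longrightarrow> s i < n \<and> s (s i) = i" and "i<n" "j<n"
  shows "mm n (Wm s t) (Ws s t) i j = (if i = j then 1 else 0)"
proof -
  define c where "c = (of_real (cos (pi*t/2)) :: complex)"
  define d where "d = (of_real (sin (pi*t/2)) :: complex)"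
  have cc: "cnj c = c" "cnj d = d" by (simp_all add: c_def d_def)
  have e: "(i = s j) = (s i = j)" using inv assms by metis
  have "mm n (Wm s t) (Ws s t) i j = (\<Sum>k<n. (if k = i then c * (c * (if j = k then 1 else 0) - \<i> * d * (if k = s j then 1 else 0)) else 0)
      + (if k = s i then \<i> * d * (c * (if j = k then 1 else 0) - \<i> * d * (if k = s j then 1 else 0)) else 0))"
    unfolding mm_def Wm_def Ws_def c_def[symmetric] d_def[symmetric]
    by (intro sum.cong refl) (auto simp: cc algebra_simps)
  also have "\<dots> = c * (c * (if j = i then 1 else 0) - \<i> * d * (if i = s j then 1 else 0))
      + \<i> * d * (c * (if j = s i then 1 else 0) - \<i> * d * (if s i = s j then 1 else 0))"
    using assms inv by (simp add: sum.distrib sum_ind)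
  also have "\<dots> = (if i = j then 1 else 0)"
  proof -
    have cd: "c*c + d*d = 1" using cs1[of "pi*t/2"] unfolding c_def d_def power2_eq_square .
    have e2: "(s i = s j) = (i = j)" using inv assms by metis
    show ?thesis unfolding e e2
      by (cases "i = j"; cases "s i = j") (use cd in \<open>auto simp: algebra_simps\<close>)
  qed
  finally show ?thesis .
qed

lemma WsWm:
  assumes inv: "\<And>i. i<n \<Longrightarrow> s i < n \<and> s (s i) = i" and "i<n" "j<n"
  shows "mm n (Ws s t) (Wm s t) i j = (if i = j then 1 else 0)"
proof -
  define c where "c = (of_real (cos (pi*t/2)) :: complex)"
  define d where "d = (of_real (sin (pi*t/2)) :: complex)"
  have cc: "cnj c = c" "cnj d = d" by (simp_all add: c_def d_def)
  have e: "(i = s j) = (s i = j)" using inv assms by metis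
  have "mm n (Ws s t) (Wm s t) i j = (\<Sum>k<n. (if k = i then c * (c * (if k = j then 1 else 0) + \<i> * d * (if j = s k then 1 else 0)) else 0)
      - (if k = s i then \<i> * d * (c * (if k = j then 1 else 0) + \<i> * d * (if j = s k then 1 else 0)) else 0))"
    unfolding mm_def Wm_def Ws_def c_def[symmetric] d_def[symmetric]
  proof (intro sum.cong refl)
    fix k assume "k \<in> {..<n}"
    then have "(i = s k) = (k = s i)" using inv assms by (metis lessThan_iff)
    then show "cnj (c * (if i = k then 1 else 0) + \<i> * d * (if i = s k then 1 else 0)) *
         (c * (if j = k then 1 else 0) + \<i> * d * (if j = s k then 1 else 0)) =
         (if k = i then c * (c * (if k = j then 1 else 0) + \<i> * d * (if j = s k then 1 else 0)) else 0) -
         (if k = s i then \<i> * d * (c * (if k = j then 1 else 0) + \<i> * d * (if j = s k then 1 else 0)) else 0)"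
      by (auto simp: cc algebra_simps)
  qed
  also have "\<dots> = c * (c * (if i = j then 1 else 0) + \<i> * d * (if j = s i then 1 else 0))
      - \<i> * d * (c * (if s i = j then 1 else 0) + \<i> * d * (if j = s (s i) then 1 else 0))"
    using assms inv by (simp add: sum_subtractf sum_ind)
  also have "\<dots> = (if i = j then 1 else 0)"
  proof -
    have cd: "c*c + d*d = 1" using cs1[of "pi*t/2"] unfolding c_def d_def power2_eq_square .
    have e2: "s (s i) = i" using inv assms by metis
    show ?thesis unfolding e2
      by (cases "i = j"; cases "s i = j") (use cd in \<open>auto simp: algebra_simps\<close>)
  qed
  finally show ?thesis .
qed


definition Cj :: "nat \<Rightarrow> (nat\<Rightarrow>nat) \<Rightarrow> real \<Rightarrow> (nat\<Rightarrow>nat\<Rightarrow>complex) \<Rightarrow> nat\<Rightarrow>nat\<Rightarrow>complex" where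
  "Cj n s t M = mm n (mm n (Wm s t) M) (Ws s t)"

definition ct :: "(nat\<Rightarrow>nat\<Rightarrow>complex) \<Rightarrow> nat\<Rightarrow>nat\<Rightarrow>complex" where
  "ct M = (\<lambda>i j. cnj (M j i))"

lemma mm_cong: "(\<And>i j. i<n \<Longrightarrow> j<n \<Longrightarrow> A i j = A' i j) \<Longrightarrow> (\<And>i j. i<n \<Longrightarrow> j<n \<Longrightarrow> B i j = B' i j)
  \<Longrightarrow> i < n \<Longrightarrow> j < n \<Longrightarrow> mm n A B i j = mm n A' B' i j"
  unfolding mm_def by (intro sum.cong) auto

lemma mm_idl: assumes "\<And>i j. i<n \<Longrightarrow> j<n \<Longrightarrow> E i j = (if i=j then 1 else 0)" "i<n"
  shows "mm n E A i j = A i j"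
proof -
  have "mm n E A i j = (\<Sum>k<n. if k = i then A k j else 0)"
    unfolding mm_def using assms by (intro sum.cong) auto
  then show ?thesis using assms sum_ind by simp
qed

lemma mm_idr: assumes "\<And>i j. i<n \<Longrightarrow> j<n \<Longrightarrow> E i j = (if i=j then 1 else 0)" "j<n"
  shows "mm n A E i j = A i j"
proof -
  have "mm n A E i j = (\<Sum>k<n. if k = j then A i k else 0)"
    unfolding mm_def using assms by (intro sum.cong) auto
  then show ?thesis using assms sum_ind by simp
qed

lemma mm_idm: assumes "\<And>i j. i<n \<Longrightarrow> j<n \<Longrightarrow> E i j = (if i=j then 1 else 0)"
  shows "mm n A (mm n E B) = mm n A B"
  unfolding mm_def[of n A] by (intro ext sum.cong refl) (simp add: mm_idl[OF assms])

lemma WsWm_cancel: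
  assumes inv: "\<And>i. i<n \<Longrightarrow> s i < n \<and> s (s i) = i"
  shows "mm n A (mm n (Ws s t) (mm n (Wm s t) C)) = mm n A C"
proof -
  have "mm n A (mm n (Ws s t) (mm n (Wm s t) C)) = mm n A (mm n (mm n (Ws s t) (Wm s t)) C)"
    by (simp only: mm_assoc)
  also have "\<dots> = mm n A C"
    by (rule mm_idm) (rule WsWm[OF inv])
  finally show ?thesis .
qed

lemma Cj_mult:
  assumes inv: "\<And>i. i<n \<Longrightarrow> s i < n \<and> s (s i) = i"
  shows "Cj n s t (mm n A B) = mm n (Cj n s t A) (Cj n s t B)"
proof -
  have "mm n (Cj n s t A) (Cj n s t B) = mm n (Wm s t) (mm n A (mm n (Ws s t) (mm n (Wm s t) (mm n B (Ws s t)))))"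
    unfolding Cj_def by (simp only: mm_assoc)
  also have "\<dots> = mm n (Wm s t) (mm n A (mm n B (Ws s t)))"
    by (simp only: WsWm_cancel[OF inv])
  finally show ?thesis unfolding Cj_def by (simp only: mm_assoc)
qed

lemma Cj_inv:
  assumes inv: "\<And>i. i<n \<Longrightarrow> s i < n \<and> s (s i) = i" and "i<n" "j<n"
  shows "mm n (mm n (Ws s t) (Cj n s t M)) (Wm s t) i j = M i j"
proof -
  have "mm n (mm n (Ws s t) (Cj n s t M)) (Wm s t) i j = mm n (mm n (Ws s t) (Wm s t)) (mm n M (mm n (Ws s t) (Wm s t))) i j"
    unfolding Cj_def by (simp only: mm_assoc)
  also have "\<dots> = mm n M (mm n (Ws s t) (Wm s t)) i j"
    using mm_idl[OF WsWm[OF inv, of _ _ t] assms(2), where A="mm n M (mm n (Ws s t) (Wm s t))" and j=j] .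
  also have "\<dots> = M i j"
    using mm_idr[OF WsWm[OF inv, of _ _ t] assms(3), where A=M and i=i] .
  finally show ?thesis .
qed

lemma Cj_id:
  assumes inv: "\<And>i. i<n \<Longrightarrow> s i < n \<and> s (s i) = i" and "i<n" "j<n"
    and E: "\<And>i j. i<n \<Longrightarrow> j<n \<Longrightarrow> E i j = (if i=j then 1 else 0)"
  shows "Cj n s t E i j = (if i = j then 1 else 0)"
proof -
  have "Cj n s t E i j = mm n (Wm s t) (mm n E (Ws s t)) i j" unfolding Cj_def by (simp only: mm_assoc)
  also have "\<dots> = mm n (Wm s t) (Ws s t) i j" by (simp only: mm_idm[OF E])
  finally show ?thesis using WmWs[OF inv assms(2,3)] by simp
qed

lemma ct_mm: "ct (mm n A B) = mm n (ct B) (ct A)"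
  unfolding ct_def mm_def by (auto intro!: ext simp: mult.commute)

lemma ct_Wm: "ct (Wm s t) = Ws s t" unfolding ct_def Ws_def by auto
lemma ct_Ws: "ct (Ws s t) = Wm s t" unfolding ct_def Ws_def by auto

lemma Cj_ct: "Cj n s t (ct M) = ct (Cj n s t M)"
  unfolding Cj_def ct_mm ct_Wm ct_Ws by (simp add: mm_assoc)

lemma mm_addR: "mm n X (\<lambda>i j. A i j + B i j) = (\<lambda>i j. mm n X A i j + mm n X B i j)"
  unfolding mm_def by (simp add: distrib_left sum.distrib)
lemma mm_addL: "mm n (\<lambda>i j. A i j + B i j) X = (\<lambda>i j. mm n A X i j + mm n B X i j)"
  unfolding mm_def by (simp add: distrib_right sum.distrib)
lemma mm_scR: "mm n X (\<lambda>i j. c * A i j) = (\<lambda>i j. c * mm n X A i j)"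
  unfolding mm_def by (simp add: sum_distrib_left mult.left_commute)
lemma mm_scL: "mm n (\<lambda>i j. c * A i j) X = (\<lambda>i j. c * mm n A X i j)"
  unfolding mm_def by (simp add: sum_distrib_left mult.assoc)

lemma Cj_add: "Cj n s t (\<lambda>i j. A i j + B i j) i j = Cj n s t A i j + Cj n s t B i j"
  unfolding Cj_def mm_addR mm_addL ..

lemma Cj_scale: "Cj n s t (\<lambda>i j. c * A i j) i j = c * Cj n s t A i j"
  unfolding Cj_def mm_scR mm_scL ..

lemma ifm: "(if P then a else 0) * (x::complex) = (if P then a*x else 0)" by simp

lemma Cj_0: assumes "i<n" "j<n" shows "Cj n s 0 M i j = M i j"
proof -
  have W: "Wm s 0 i k = (if k = i then 1 else 0)" for i k by (simp add: Wm_def)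
  have W2: "Ws s 0 k j = (if k = j then 1 else 0)" for j k by (simp add: Ws_def W)
  have 1: "mm n (Wm s 0) M i l = M i l" for l
    unfolding mm_def W ifm using assms by (simp add: sum_ind)
  have ifm2: "(x::complex) * (if P then a else 0) = (if P then x*a else 0)" for x P a by simp
  have "Cj n s 0 M i j = (\<Sum>l<n. if l = j then M i l * 1 else 0)"
    unfolding Cj_def mm_def[of n "mm n (Wm s 0) M"] 1 W2 ifm2 ..
  also have "\<dots> = M i j" using assms by (simp add: sum_ind)
  finally show ?thesis .
qed


lemma Cj_1: assumes inv: "\<And>i. i<n \<Longrightarrow> s i < n \<and> s (s i) = i" and "i<n" "j<n"
  shows "Cj n s 1 M i j = M (s i) (s j)"
proof -
  have W: "Wm s 1 i k = (if k = s i then \<i> else 0)" for i k by (simp add: Wm_def)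
  have W2: "Ws s 1 k j = (if k = s j then - \<i> else 0)" for j k by (simp add: Ws_def W)
  have 1: "mm n (Wm s 1) M i l = \<i> * M (s i) l" for l
    unfolding mm_def W ifm using inv assms by (simp add: sum_ind)
  have ifm2: "(x::complex) * (if P then a else 0) = (if P then x*a else 0)" for x P a by simp
  have "Cj n s 1 M i j = (\<Sum>l<n. if l = s j then \<i> * M (s i) l * - \<i> else 0)"
    unfolding Cj_def mm_def[of n "mm n (Wm s 1) M"] 1 W2 ifm2 ..
  also have "\<dots> = M (s i) (s j)" using inv assms by (simp add: sum_ind algebra_simps)
  finally show ?thesis .
qed

lemma Cj_cont:
  assumes "\<And>i j. continuous_on S (\<lambda>t. M t i j)"
  shows "continuous_on S (\<lambda>t. Cj n s t (M t) i j)"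
  unfolding Cj_def mm_def Wm_def Ws_def
  by (intro continuous_intros assms) simp_all




datatype lab = LId nat nat | LA nat nat | LB nat nat

lemma enc_div[simp]: "b < (p::nat) \<Longrightarrow> (a*p+b) div p = a"
  by simp
lemma enc_mod[simp]: "b < (p::nat) \<Longrightarrow> (a*p+b) mod p = b"
  by simp
lemma enc_lt: "a < (c::nat) \<Longrightarrow> b < p \<Longrightarrow> a*p + b < c*p"
proof -
  assume "a < c" "b < p"
  then have "a*p + b < (a+1)*p" by simp
  also have "\<dots> \<le> c*p" using \<open>a<c\<close> by (intro mult_right_mono) auto
  finally show ?thesis .
qed
lemma enc_inj: "b < (p::nat) \<Longrightarrow> b' < p \<Longrightarrow> (a*p+b = a'*p+b') = (a = a' \<and> b = b')"
  by (metis enc_div enc_mod)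
lemma divmod_eq_iff: "((n::nat) = n') = (n div q = n' div q \<and> n mod q = n' mod q)"
  by (metis div_mult_mod_eq)

lemma bijW: "\<forall>a\<in>A. g (f a) = a \<Longrightarrow> \<forall>u\<in>B. f (g u) = u \<and> g u \<in> A \<Longrightarrow> f ` A \<subseteq> B \<Longrightarrow> bij_betw f A B"
  by (rule bij_betw_byWitness[where f'=g]) auto

locale cons =
  fixes p q P0 P1 x0 y0 x1 y1 :: nat
  assumes p: "0 < p" and q: "0 < q" and P0: "P0 = x0*p + y0*q" and P1: "P1 = x1*p + y1*q"
    and x1x0: "x1 < x0" and y0y1: "y0 < y1"
begin

abbreviation "XA \<equiv> x0*p"
abbreviation "YA \<equiv> x1*p"
abbreviation "N \<equiv> P0*P1"

definition pr :: "nat \<Rightarrow> nat \<Rightarrow> bool" where "pr c e \<longleftrightarrow> c < x1 \<and> e < y0"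
definition isidc :: "nat \<Rightarrow> nat \<Rightarrow> bool" where "isidc c y \<longleftrightarrow> YA \<le> y \<and> \<not> pr c ((y - YA) div q)"

definition blkc :: "nat \<Rightarrow> nat \<Rightarrow> lab" where
  "blkc x y = (if x < XA then (if isidc (x div p) y then LId (x div p) ((y - YA) div q) else LA (x div p) y)
      else LB ((x - XA) div q) y)"
definition posc :: "nat \<Rightarrow> nat \<Rightarrow> nat" where
  "posc x y = (if x < XA then (if isidc (x div p) y then x mod p * q + (y - YA) mod q else x mod p)
      else (x - XA) mod q)"
definition blk :: "nat \<Rightarrow> lab" where "blk i = blkc (i div P1) (i mod P1)"
definition pos :: "nat \<Rightarrow> nat" where "pos i = posc (i div P1) (i mod P1)"
definition sz :: "lab \<Rightarrow> nat" where "sz r = (case r of LId _ _ \<Rightarrow> p*q | LA _ _ \<Rightarrow> p | LB _ _ \<Rightarrow> q)"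

lemma P1pos: "0 < P1" using y0y1 q by (simp add: P1)
lemma x0pos: "0 < x0" using x1x0 by simp
lemma XA_le: "YA \<le> XA" using x1x0 by (simp add: mult_le_mono1)

lemma coord: "k < N \<Longrightarrow> k = (k div P1) * P1 + k mod P1 \<and> k div P1 < P0 \<and> k mod P1 < P1"
  using P1pos by (auto simp: less_mult_imp_div_less mult.commute)
lemma enc_N: "x < P0 \<Longrightarrow> y < P1 \<Longrightarrow> x * P1 + y < N"
  using enc_lt[of x P0 y P1] by (simp add: mult.commute)
lemma enc_coord[simp]: "y < P1 \<Longrightarrow> (x * P1 + y) div P1 = x" "y < P1 \<Longrightarrow> (x * P1 + y) mod P1 = y"
  by auto

lemma xa_div: "x < XA \<Longrightarrow> x div p < x0" using p by (simp add: less_mult_imp_div_less)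
lemma xb_div: "XA \<le> x \<Longrightarrow> x < P0 \<Longrightarrow> (x - XA) div q < y0" using q P0 by (simp add: less_mult_imp_div_less)
lemma yb_div: "YA \<le> y \<Longrightarrow> y < P1 \<Longrightarrow> (y - YA) div q < y1" using q P1 by (simp add: less_mult_imp_div_less)

lemma bij_blk: assumes "i < N" shows "bij_betw pos {k. k<N \<and> blk k = blk i} {..<sz (blk i)}"
proof -
  define x where "x = i div P1"
  define y where "y = i mod P1"
  have xy: "x < P0" "y < P1" using coord[OF assms] x_def y_def by auto
  show ?thesis
  proof (cases "x < XA")
    case True
    note xa = True
    define c where "c = x div p"
    have c: "c < x0" using xa_div[OF xa] c_def by simp
    show ?thesis
    proof (cases "isidc c y")
      case True
      define e where "e = (y - YA) div q"
      have y': "YA \<le> y" using True isidc_def by auto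
      have e: "e < y1" using yb_div[OF y' xy(2)] e_def by simp
      have bi: "blk i = LId c e" using True xa unfolding blk_def blkc_def x_def[symmetric] y_def[symmetric] c_def e_def by simp
      define g where "g u = (c*p + u div q)*P1 + (YA + e*q + u mod q)" for u
      have gy: "YA + e*q + u mod q < P1" for u
        using enc_lt[of e y1 "u mod q" q] e q P1 by simp
      have gx: "u < p*q \<Longrightarrow> c*p + u div q < XA" for u
        using enc_lt[of c x0 "u div q" p] c q by (simp add: less_mult_imp_div_less mult.commute)
      have idc: "isidc c (YA + e*q + u mod q)" for u
        using True q unfolding isidc_def e_def by (simp add: add.commute[of _ "u mod q"] )
      show ?thesis unfolding bi
      proof (rule bijW[where g=g])
        show "\<forall>k\<in>{k. k < N \<and> blk k = LId c e}. g (pos k) = k"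
        proof
          fix k assume "k \<in> {k. k < N \<and> blk k = LId c e}"
          then have k: "k < N" "blk k = LId c e" by auto
          note kc = coord[OF k(1)]
          have kx: "k div P1 < XA" "isidc (k div P1 div p) (k mod P1)" "k div P1 div p = c" "(k mod P1 - YA) div q = e"
            using k(2) unfolding blk_def blkc_def by (auto split: if_splits)
          have ky: "YA \<le> k mod P1" using kx(2) isidc_def by auto
          have "pos k = k div P1 mod p * q + (k mod P1 - YA) mod q" unfolding pos_def posc_def using kx by simp
          then have "g (pos k) = (c*p + k div P1 mod p)*P1 + (YA + e*q + (k mod P1 - YA) mod q)"
            unfolding g_def using p q by simp
          also have "\<dots> = k" using kx ky kc
            by (metis div_mult_mod_eq le_add_diff_inverse add.assoc)
          finally show "g (pos k) = k" .
        qed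
        show "\<forall>u\<in>{..<sz (LId c e)}. pos (g u) = u \<and> g u \<in> {k. k < N \<and> blk k = LId c e}"
        proof
          fix u assume "u \<in> {..<sz (LId c e)}"
          then have u: "u < p*q" by (simp add: sz_def)
          have "g u < N" unfolding g_def using gx[OF u] gy xy P0 by (intro enc_N) auto
          moreover have "blk (g u) = LId c e" "pos (g u) = u"
            using gx[OF u] gy[of u] idc[of u] u p q
            unfolding g_def blk_def blkc_def pos_def posc_def
            by (auto simp: less_mult_imp_div_less mult.commute)
          ultimately show "pos (g u) = u \<and> g u \<in> {k. k < N \<and> blk k = LId c e}" by simp
        qed
        show "pos ` {k. k < N \<and> blk k = LId c e} \<subseteq> {..<sz (LId c e)}"
        proof
          fix u assume "u \<in> pos ` {k. k < N \<and> blk k = LId c e}"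
          then obtain k where k: "k < N" "blk k = LId c e" "u = pos k" by auto
          have kx: "k div P1 < XA" "isidc (k div P1 div p) (k mod P1)"
            using k(2) unfolding blk_def blkc_def by (auto split: if_splits)
          have "u = k div P1 mod p * q + (k mod P1 - YA) mod q" using k kx unfolding pos_def posc_def by simp
          then show "u \<in> {..<sz (LId c e)}" using enc_lt[of "k div P1 mod p" p "(k mod P1 - YA) mod q" q] p q
            by (simp add: sz_def mult.commute)
        qed
      qed
    next
      case False
      have bi: "blk i = LA c y" using False xa unfolding blk_def blkc_def x_def[symmetric] y_def[symmetric] c_def by simp
      define g where "g u = (c*p + u)*P1 + y" for u
      show ?thesis unfolding bi
      proof (rule bijW[where g=g])
        show "\<forall>k\<in>{k. k < N \<and> blk k = LA c y}. g (pos k) = k"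
        proof
          fix k assume "k \<in> {k. k < N \<and> blk k = LA c y}"
          then have k: "k < N" "blk k = LA c y" by auto
          note kc = coord[OF k(1)]
          have kx: "k div P1 < XA" "k div P1 div p = c" "k mod P1 = y" "\<not> isidc c y"
            using k(2) unfolding blk_def blkc_def by (auto split: if_splits)
          have "pos k = k div P1 mod p" unfolding pos_def posc_def using kx by simp
          then show "g (pos k) = k" unfolding g_def using kx kc by (metis div_mult_mod_eq)
        qed
        show "\<forall>u\<in>{..<sz (LA c y)}. pos (g u) = u \<and> g u \<in> {k. k < N \<and> blk k = LA c y}"
        proof
          fix u assume "u \<in> {..<sz (LA c y)}"
          then have u: "u < p" by (simp add: sz_def)
          have gx: "c*p+u < XA" using enc_lt[OF c u] .
          have "g u < N" unfolding g_def using gx xy P0 by (intro enc_N) auto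
          moreover have "blk (g u) = LA c y" "pos (g u) = u"
            using gx u p False xy unfolding g_def blk_def blkc_def pos_def posc_def by auto
          ultimately show "pos (g u) = u \<and> g u \<in> {k. k < N \<and> blk k = LA c y}" by simp
        qed
        show "pos ` {k. k < N \<and> blk k = LA c y} \<subseteq> {..<sz (LA c y)}"
        proof
          fix u assume "u \<in> pos ` {k. k < N \<and> blk k = LA c y}"
          then obtain k where k: "k < N" "blk k = LA c y" "u = pos k" by auto
          have kx: "k div P1 < XA" "\<not> isidc (k div P1 div p) (k mod P1)"
            using k(2) unfolding blk_def blkc_def by (auto split: if_splits)
          then show "u \<in> {..<sz (LA c y)}" using k p unfolding pos_def posc_def sz_def by simp
        qed
      qed
    qed
  next
    case False
    note xb = False
    define e where "e = (x - XA) div q"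
    have e: "e < y0" using xb_div[of x] xb xy e_def by simp
    have bi: "blk i = LB e y" using xb unfolding blk_def blkc_def x_def[symmetric] y_def[symmetric] e_def by simp
    define g where "g u = (XA + e*q + u)*P1 + y" for u
    show ?thesis unfolding bi
    proof (rule bijW[where g=g])
      show "\<forall>k\<in>{k. k < N \<and> blk k = LB e y}. g (pos k) = k"
      proof
        fix k assume "k \<in> {k. k < N \<and> blk k = LB e y}"
        then have k: "k < N" "blk k = LB e y" by auto
        note kc = coord[OF k(1)]
        have kx: "\<not> k div P1 < XA" "(k div P1 - XA) div q = e" "k mod P1 = y"
          using k(2) unfolding blk_def blkc_def by (auto split: if_splits)
        have "pos k = (k div P1 - XA) mod q" unfolding pos_def posc_def using kx by simp
        then show "g (pos k) = k" unfolding g_def using kx kc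
          by (metis div_mult_mod_eq le_add_diff_inverse add.assoc not_less)
      qed
      show "\<forall>u\<in>{..<sz (LB e y)}. pos (g u) = u \<and> g u \<in> {k. k < N \<and> blk k = LB e y}"
      proof
        fix u assume "u \<in> {..<sz (LB e y)}"
        then have u: "u < q" by (simp add: sz_def)
        have gx: "XA + e*q+u < P0" using enc_lt[OF e u] P0 by simp
        have "g u < N" unfolding g_def using gx xy by (intro enc_N) auto
        moreover have "blk (g u) = LB e y" "pos (g u) = u"
          using gx u q xy unfolding g_def blk_def blkc_def pos_def posc_def by auto
        ultimately show "pos (g u) = u \<and> g u \<in> {k. k < N \<and> blk k = LB e y}" by simp
      qed
      show "pos ` {k. k < N \<and> blk k = LB e y} \<subseteq> {..<sz (LB e y)}"
      proof
        fix u assume "u \<in> pos ` {k. k < N \<and> blk k = LB e y}"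
        then obtain k where k: "k < N" "blk k = LB e y" "u = pos k" by auto
        have kx: "\<not> k div P1 < XA"
          using k(2) unfolding blk_def blkc_def by (auto split: if_splits)
        then show "u \<in> {..<sz (LB e y)}" using k q unfolding pos_def posc_def sz_def by simp
      qed
    qed
  qed
qed


definition Fm :: "matfun \<Rightarrow> real \<Rightarrow> lab \<Rightarrow> nat \<Rightarrow> nat \<Rightarrow> complex" where
  "Fm f t r u v = (case r of LId _ _ \<Rightarrow> f t u v | LA _ _ \<Rightarrow> f 0 (u*q) (v*q) | LB _ _ \<Rightarrow> f 1 u v)"
definition BM :: "matfun \<Rightarrow> real \<Rightarrow> nat \<Rightarrow> nat \<Rightarrow> complex" where
  "BM f t i j = (if blk i = blk j then Fm f t (blk i) (pos i) (pos j) else 0)"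

lemma f0_form: assumes "f \<in> dimdrop p q" "u < p*q" "v < p*q"
  shows "f 0 u v = f 0 (u div q * q) (v div q * q) * (if u mod q = v mod q then 1 else 0)"
proof -
  obtain A where A: "\<forall>i<p*q. \<forall>j<p*q. f 0 i j = A (i div q) (j div q) * (if i mod q = j mod q then 1 else 0)"
    using assms(1) unfolding dimdrop_def in_Mp_tensor_1q_def by auto
  have le: "w div q * q < p*q" if "w < p*q" for w
    using that by (meson div_times_less_eq_dividend le_less_trans)
  have "f 0 (u div q * q) (v div q * q) = A (u div q) (v div q)"
    using A le[OF assms(2)] le[OF assms(3)] q by simp
  then show ?thesis using A assms by simp
qed

lemma f1_form: assumes "f \<in> dimdrop p q" "u < p*q" "v < p*q"
  shows "f 1 u v = (if u div q = v div q then 1 else 0) * f 1 (u mod q) (v mod q)"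
proof -
  obtain B where B: "\<forall>i<p*q. \<forall>j<p*q. f 1 i j = (if i div q = j div q then 1 else 0) * B (i mod q) (j mod q)"
    using assms(1) unfolding dimdrop_def in_1p_tensor_Mq_def by auto
  have le: "w mod q < p*q" for w
  proof -
    have "q \<le> p*q" using p by simp
    then show ?thesis using q by (meson mod_less_divisor less_le_trans)
  qed
  have "f 1 (u mod q) (v mod q) = B (u mod q) (v mod q)"
    using B le[of u] le[of v] q by simp
  then show ?thesis using B assms by simp
qed

end

lemma sum_mod0: assumes "0 < (q::nat)" "\<And>k. k < p*q \<Longrightarrow> k mod q \<noteq> 0 \<Longrightarrow> h k = 0"
  shows "(\<Sum>k<p*q. h k) = (\<Sum>w<p. h (w*q))"
proof -
  have inj: "inj_on (\<lambda>w. w*q) {..<p}" using assms(1) by (auto simp: inj_on_def)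
  have sub: "(\<lambda>w. w*q) ` {..<p} \<subseteq> {..<p*q}" using assms(1) by auto
  have "(\<Sum>w<p. h (w*q)) = (\<Sum>k\<in>(\<lambda>w. w*q) ` {..<p}. h k)"
    by (simp add: sum.reindex[OF inj])
  also have "\<dots> = (\<Sum>k<p*q. h k)"
  proof (rule sum.mono_neutral_left[OF _ sub])
    show "\<forall>k\<in>{..<p*q} - (\<lambda>w. w*q) ` {..<p}. h k = 0"
    proof
      fix k assume k: "k \<in> {..<p*q} - (\<lambda>w. w*q) ` {..<p}"
      have "k mod q \<noteq> 0"
      proof
        assume "k mod q = 0"
        then have "k = (k div q) * q" by (metis add.right_neutral div_mult_mod_eq)
        moreover have "k div q < p" using k assms(1) by (simp add: less_mult_imp_div_less)
        ultimately show False using k by auto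
      qed
      then show "h k = 0" using k assms(2) by auto
    qed
  qed simp
  finally show ?thesis by simp
qed

lemma sum_lt_q: assumes "(q::nat) \<le> m" "\<And>k. k < m \<Longrightarrow> q \<le> k \<Longrightarrow> h k = 0"
  shows "(\<Sum>k<m. h k) = (\<Sum>k<q. h k)"
  by (rule sum.mono_neutral_right) (use assms in auto)

lemma block_mult:
  fixes pos :: "nat \<Rightarrow> nat" and blk :: "nat \<Rightarrow> 'b"
  assumes bij: "\<And>i. i<n \<Longrightarrow> bij_betw pos {k. k<n \<and> blk k = blk i} {..<sz (blk i)}"
    and mult: "\<And>i u v. i<n \<Longrightarrow> u<sz (blk i) \<Longrightarrow> v<sz (blk i) \<Longrightarrow>
       H (blk i) u v = (\<Sum>w<sz (blk i). F (blk i) u w * G (blk i) w v)"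
    and ij: "i<n" "j<n"
  shows "(if blk i = blk j then H (blk i) (pos i) (pos j) else 0) =
    (\<Sum>k<n. (if blk i = blk k then F (blk i) (pos i) (pos k) else 0) * (if blk k = blk j then G (blk k) (pos k) (pos j) else (0::complex)))"
proof -
  define S where "S = {k. k<n \<and> blk k = blk i}"
  have fin: "finite {..<n}" by simp
  have "(\<Sum>k<n. (if blk i = blk k then F (blk i) (pos i) (pos k) else 0) * (if blk k = blk j then G (blk k) (pos k) (pos j) else 0))
      = (\<Sum>k<n. if blk k = blk i then F (blk i) (pos i) (pos k) * (if blk i = blk j then G (blk i) (pos k) (pos j) else 0) else 0)"
    by (intro sum.cong) auto
  also have "\<dots> = (\<Sum>k\<in>S. F (blk i) (pos i) (pos k) * (if blk i = blk j then G (blk i) (pos k) (pos j) else 0))"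
    unfolding S_def using sum.inter_filter[OF fin, symmetric] by (simp add: lessThan_def)
  finally have eq: "(\<Sum>k<n. (if blk i = blk k then F (blk i) (pos i) (pos k) else 0) * (if blk k = blk j then G (blk k) (pos k) (pos j) else 0))
      = (\<Sum>k\<in>S. F (blk i) (pos i) (pos k) * (if blk i = blk j then G (blk i) (pos k) (pos j) else 0))" .
  show ?thesis
  proof (cases "blk i = blk j")
    case True
    have b: "bij_betw pos S {..<sz (blk i)}" using bij[OF ij(1)] S_def by simp
    have pi: "pos i < sz (blk i)" using bij_betwE[OF b] ij S_def by auto
    have pj: "pos j < sz (blk i)" using bij_betwE[OF b] ij True S_def by auto
    have "(\<Sum>k\<in>S. F (blk i) (pos i) (pos k) * G (blk i) (pos k) (pos j)) = (\<Sum>w<sz (blk i). F (blk i) (pos i) w * G (blk i) w (pos j))"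
      using sum.reindex_bij_betw[OF b, of "\<lambda>w. F (blk i) (pos i) w * G (blk i) w (pos j)"] by simp
    then show ?thesis using eq True mult[OF ij(1) pi pj] by simp
  next
    case False
    then show ?thesis using eq by simp
  qed
qed



context cons begin

lemma uq_lt: "u < p \<Longrightarrow> u*q < p*q" using q by simp

lemma Fm_mult: assumes f: "f \<in> dimdrop p q" and g: "g \<in> dimdrop p q" and uv: "u < sz r" "v < sz r"
  shows "Fm (mf_mult (p*q) f g) t r u v = (\<Sum>w<sz r. Fm f t r u w * Fm g t r w v)"
proof (cases r)
  case (LId c e)
  then show ?thesis by (simp add: Fm_def sz_def mf_mult_def)
next
  case (LA c y)
  then have u: "u < p" "v < p" using uv by (auto simp: sz_def)
  have "Fm (mf_mult (p*q) f g) t r u v = (\<Sum>k<p*q. f 0 (u*q) k * g 0 k (v*q))"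
    using LA by (simp add: Fm_def mf_mult_def)
  also have "\<dots> = (\<Sum>w<p. f 0 (u*q) (w*q) * g 0 (w*q) (v*q))"
  proof (rule sum_mod0[OF q])
    fix k assume k: "k < p*q" "k mod q \<noteq> 0"
    have "f 0 (u*q) k = f 0 (u*q div q * q) (k div q * q) * (if u*q mod q = k mod q then 1 else 0)"
      using f0_form[OF f uq_lt[OF u(1)] k(1)] .
    also have "\<dots> = 0" using k by simp
    finally show "f 0 (u*q) k * g 0 k (v*q) = 0" by simp
  qed
  finally show ?thesis using LA by (simp add: Fm_def sz_def)
next
  case (LB e y)
  then have u: "u < q" "v < q" using uv by (auto simp: sz_def)
  have qpq: "q \<le> p*q" using p by simp
  have "Fm (mf_mult (p*q) f g) t r u v = (\<Sum>k<p*q. f 1 u k * g 1 k v)"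
    using LB by (simp add: Fm_def mf_mult_def)
  also have "\<dots> = (\<Sum>k<q. f 1 u k * g 1 k v)"
  proof (rule sum_lt_q[OF qpq])
    fix k assume k: "k < p*q" "q \<le> k"
    have "f 1 u k = (if u div q = k div q then 1 else 0) * f 1 (u mod q) (k mod q)"
      using f1_form[OF f _ k(1), of u] u qpq by simp
    also have "\<dots> = 0" using k u q by (auto simp: div_eq_0_iff)
    finally show "f 1 u k * g 1 k v = 0" by simp
  qed
  finally show ?thesis using LB by (simp add: Fm_def sz_def)
qed

lemma BM_mult: assumes f: "f \<in> dimdrop p q" and g: "g \<in> dimdrop p q" and ij: "i < N" "j < N"
  shows "BM (mf_mult (p*q) f g) t i j = mm N (BM f t) (BM g t) i j"
  unfolding BM_def mm_def
  by (rule block_mult[where sz=sz, OF bij_blk _ ij]) (simp_all add: Fm_mult[OF f g])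

lemma BM_star: "BM (mf_star f) t i j = cnj (BM f t j i)"
  unfolding BM_def Fm_def mf_star_def by (auto split: lab.split)

lemma BM_add: "BM (mf_add f g) t = (\<lambda>i j. BM f t i j + BM g t i j)"
  unfolding BM_def Fm_def mf_add_def by (auto intro!: ext split: lab.split)

lemma BM_scale: "BM (mf_scale c f) t = (\<lambda>i j. c * BM f t i j)"
  unfolding BM_def Fm_def mf_scale_def by (auto intro!: ext split: lab.split)

lemma BM_unit: assumes t: "t \<in> {0..1}" and ij: "i < N" "j < N"
  shows "BM (mf_unit (p*q)) t i j = (if i = j then 1 else 0)"
proof -
  have Fu: "Fm (mf_unit (p*q)) t r u v = (if u = v then 1 else 0)" if "u < sz r" "v < sz r" for r u v
  proof (cases r)
    case (LId c e) then show ?thesis using that t by (simp add: Fm_def sz_def mf_unit_def)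
  next
    case (LA c y) then show ?thesis using that t q uq_lt by (simp add: Fm_def sz_def mf_unit_def)
  next
    case (LB e y)
    have qpq: "q \<le> p*q" using p by simp
    have "v < p*q" using that LB qpq by (auto simp: sz_def intro: less_le_trans)
    then show ?thesis using that t LB by (simp add: Fm_def sz_def mf_unit_def)
  qed
  show ?thesis
  proof (cases "blk i = blk j")
    case True
    have b: "bij_betw pos {k. k<N \<and> blk k = blk i} {..<sz (blk i)}" using bij_blk[OF ij(1)] .
    have pi: "pos i < sz (blk i)" "pos j < sz (blk i)" using bij_betwE[OF b] ij True by auto
    have "pos i = pos j \<longleftrightarrow> i = j"
      using bij_betw_imp_inj_on[OF b] ij True unfolding inj_on_def by auto
    then show ?thesis unfolding BM_def using True Fu[OF pi] by simp
  next
    case False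
    then show ?thesis unfolding BM_def by auto
  qed
qed

lemma BM_cont: assumes f: "f \<in> dimdrop p q"
  shows "continuous_on {0..1} (\<lambda>t. BM f t i j)"
proof (cases "blk i = blk j")
  case True
  have c: "continuous_on {0..1} (\<lambda>t. f t u v)" for u v using f unfolding dimdrop_def by auto
  show ?thesis using True by (cases "blk j") (simp_all add: c BM_def Fm_def)
qed (simp add: BM_def)

end


lemma div_lt_imp: "n div (q::nat) < m \<Longrightarrow> 0 < q \<Longrightarrow> n < m*q"
  using enc_lt[of "n div q" m "n mod q" q] by simp

context cons begin

definition sigc :: "nat \<Rightarrow> nat \<Rightarrow> nat \<times> nat" where
  "sigc x y = (if x < XA \<and> y < YA then (x div p * p + y mod p, y div p * p + x mod p)
    else if XA \<le> x \<and> YA \<le> y then (XA + (x - XA) div q * q + (y - YA) mod q, YA + (y - YA) div q * q + (x - XA) mod q)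
    else if x < XA \<and> YA \<le> y \<and> pr (x div p) ((y - YA) div q) then (XA + (y - YA), x)
    else if XA \<le> x \<and> y < YA then (y, YA + (x - XA))
    else (x, y))"

lemma sigc_AA: assumes "x < XA" "y < YA"
  shows "sigc x y = (x div p * p + y mod p, y div p * p + x mod p)"
    "x div p * p + y mod p < XA" "y div p * p + x mod p < YA"
proof -
  show "sigc x y = (x div p * p + y mod p, y div p * p + x mod p)" using assms by (simp add: sigc_def)
  show "x div p * p + y mod p < XA" using enc_lt[of "x div p" x0 "y mod p" p] xa_div[OF assms(1)] p by simp
  have "y div p < x1" using assms(2) p by (simp add: less_mult_imp_div_less)
  then show "y div p * p + x mod p < YA" using enc_lt[of "y div p" x1 "x mod p" p] p by simp
qed

lemma sigc_BB: assumes "XA \<le> x" "YA \<le> y" "x < P0" "y < P1"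
  shows "sigc x y = (XA + (x - XA) div q * q + (y - YA) mod q, YA + (y - YA) div q * q + (x - XA) mod q)"
    "XA + (x - XA) div q * q + (y - YA) mod q < P0" "YA + (y - YA) div q * q + (x - XA) mod q < P1"
proof -
  show "sigc x y = (XA + (x - XA) div q * q + (y - YA) mod q, YA + (y - YA) div q * q + (x - XA) mod q)"
    using assms XA_le by (auto simp: sigc_def)
  show "XA + (x - XA) div q * q + (y - YA) mod q < P0"
    using enc_lt[of "(x - XA) div q" y0 "(y - YA) mod q" q] xb_div[OF assms(1,3)] q P0 by simp
  show "YA + (y - YA) div q * q + (x - XA) mod q < P1"
    using enc_lt[of "(y - YA) div q" y1 "(x - XA) mod q" q] yb_div[OF assms(2,4)] q P1 by simp
qed

lemma sigc_ABp: assumes "x < XA" "YA \<le> y" "pr (x div p) ((y - YA) div q)"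
  shows "sigc x y = (XA + (y - YA), x)" "XA \<le> XA + (y - YA)" "XA + (y - YA) < P0" "x < YA"
proof -
  show "sigc x y = (XA + (y - YA), x)" using assms XA_le by (auto simp: sigc_def)
  show "XA \<le> XA + (y - YA)" by simp
  show "XA + (y - YA) < P0" using div_lt_imp[of "y - YA" q y0] assms(3) q P0 by (simp add: pr_def)
  show "x < YA" using div_lt_imp[of x p x1] assms(3) p by (simp add: pr_def)
qed

lemma sigc_BA: assumes "XA \<le> x" "y < YA" "x < P0"
  shows "sigc x y = (y, YA + (x - XA))" "y < XA" "YA \<le> YA + (x - XA)" "YA + (x - XA) < P1"
    "pr (y div p) ((x - XA) div q)"
proof -
  show "sigc x y = (y, YA + (x - XA))" using assms XA_le by (auto simp: sigc_def)
  show "y < XA" using assms(2) XA_le by linarith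
  show "YA \<le> YA + (x - XA)" by simp
  have "x - XA < y0 * q" using assms P0 by simp
  then show "YA + (x - XA) < P1" using y0y1 q P1
    by (metis add_less_mono1 add.commute less_trans mult_less_mono1 nat_add_left_cancel_less)
  show "pr (y div p) ((x - XA) div q)" unfolding pr_def
    using assms p q P0 xb_div by (simp add: less_mult_imp_div_less)
qed

lemma sigc_id: assumes "x < XA" "YA \<le> y" "\<not> pr (x div p) ((y - YA) div q)"
  shows "sigc x y = (x, y)"
  using assms by (auto simp: sigc_def)

lemma sigc_valid: assumes "x < P0" "y < P1"
  shows "fst (sigc x y) < P0 \<and> snd (sigc x y) < P1 \<and> sigc (fst (sigc x y)) (snd (sigc x y)) = (x, y)"
proof -
  have XP: "XA \<le> P0" using P0 by simp
  have YP: "YA \<le> P1" using P1 by simp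
  consider "x < XA" "y < YA" | "XA \<le> x" "YA \<le> y" | "x < XA" "YA \<le> y" "pr (x div p) ((y - YA) div q)"
    | "XA \<le> x" "y < YA" | "x < XA" "YA \<le> y" "\<not> pr (x div p) ((y - YA) div q)" by linarith
  then show ?thesis
  proof cases
    case 1
    note s = sigc_AA[OF 1]
    have "sigc (fst (sigc x y)) (snd (sigc x y)) = (x div p * p + x mod p, y div p * p + y mod p)"
      using sigc_AA(1)[OF s(2,3)] s(1) p by simp
    then show ?thesis using s XP YP by simp
  next
    case 2
    note s = sigc_BB[OF 2 assms]
    have "sigc (fst (sigc x y)) (snd (sigc x y)) = (XA + ((x - XA) div q * q + (x - XA) mod q), YA + ((y - YA) div q * q + (y - YA) mod q))"
      using sigc_BB(1)[OF _ _ s(2,3)] s(1) q by (simp add: add.assoc)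
    then show ?thesis using s 2 by simp
  next
    case 3
    note s = sigc_ABp[OF 3]
    have "sigc (fst (sigc x y)) (snd (sigc x y)) = (x, YA + (y - YA))"
      using sigc_BA(1)[OF s(2) s(4) s(3)] s(1) by simp
    then show ?thesis using s 3 YP assms by simp
  next
    case 4
    note s = sigc_BA[OF 4 assms(1)]
    have "sigc (fst (sigc x y)) (snd (sigc x y)) = (XA + (x - XA), y)"
      using sigc_ABp(1)[OF s(2,3)] s(1,5) by simp
    then show ?thesis using s 4 assms XP by simp
  next
    case 5
    then show ?thesis using sigc_id[OF 5] assms by simp
  qed
qed

definition sg :: "nat \<Rightarrow> nat" where
  "sg i = (if i < N then fst (sigc (i div P1) (i mod P1)) * P1 + snd (sigc (i div P1) (i mod P1)) else i)"

lemma sg_inv: assumes "i < N" shows "sg i < N \<and> sg (sg i) = i"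
proof -
  define x where "x = i div P1"
  define y where "y = i mod P1"
  have c: "x < P0" "y < P1" "i = x * P1 + y" using coord[OF assms] x_def y_def by auto
  note v = sigc_valid[OF c(1,2)]
  have si: "sg i = fst (sigc x y) * P1 + snd (sigc x y)" using assms unfolding sg_def x_def y_def by simp
  have lt: "sg i < N" using si v enc_N by simp
  have "sg (sg i) = fst (sigc (fst (sigc x y)) (snd (sigc x y))) * P1 + snd (sigc (fst (sigc x y)) (snd (sigc x y)))"
    using lt si v unfolding sg_def by simp
  also have "\<dots> = i" using v c by simp
  finally show ?thesis using lt by simp
qed

lemma blk_sg: "i < N \<Longrightarrow> blk (sg i) = blkc (fst (sigc (i div P1) (i mod P1))) (snd (sigc (i div P1) (i mod P1)))"
  using sigc_valid[of "i div P1" "i mod P1"] coord[of i] unfolding sg_def blk_def by simp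
lemma pos_sg: "i < N \<Longrightarrow> pos (sg i) = posc (fst (sigc (i div P1) (i mod P1))) (snd (sigc (i div P1) (i mod P1)))"
  using sigc_valid[of "i div P1" "i mod P1"] coord[of i] unfolding sg_def pos_def by simp

end


context cons begin

definition Bt :: "matfun \<Rightarrow> nat \<Rightarrow> nat \<Rightarrow> complex" where
  "Bt f y y' = (if y < YA \<and> y' < YA \<and> y div p = y' div p then f 0 (y mod p * q) (y' mod p * q)
     else if YA \<le> y \<and> YA \<le> y' \<and> (y - YA) div q = (y' - YA) div q then f 1 ((y - YA) mod q) ((y' - YA) mod q) else 0)"

definition BC :: "matfun \<Rightarrow> real \<Rightarrow> nat \<times> nat \<Rightarrow> nat \<times> nat \<Rightarrow> complex" where
  "BC f t a b = (if blkc (fst a) (snd a) = blkc (fst b) (snd b) then Fm f t (blkc (fst a) (snd a)) (posc (fst a) (snd a)) (posc (fst b) (snd b)) else 0)"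

lemma mlt: "x mod p < p" "x mod q < q" using p q by auto

lemma kAA: assumes "x < XA" "y < YA"
  shows "blkc (fst (sigc x y)) (snd (sigc x y)) = LA (x div p) (y div p * p + x mod p)"
    "posc (fst (sigc x y)) (snd (sigc x y)) = y mod p" "y div p * p + x mod p < YA"
  using sigc_AA[OF assms] mlt unfolding blkc_def posc_def isidc_def by auto

lemma kBB: assumes "XA \<le> x" "YA \<le> y" "x < P0" "y < P1"
  shows "blkc (fst (sigc x y)) (snd (sigc x y)) = LB ((x - XA) div q) (YA + (y - YA) div q * q + (x - XA) mod q)"
    "posc (fst (sigc x y)) (snd (sigc x y)) = (y - YA) mod q"
  using sigc_BB[OF assms] mlt unfolding blkc_def posc_def by auto

lemma kABp: assumes "x < XA" "YA \<le> y" "pr (x div p) ((y - YA) div q)"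
  shows "blkc (fst (sigc x y)) (snd (sigc x y)) = LB ((y - YA) div q) x"
    "posc (fst (sigc x y)) (snd (sigc x y)) = (y - YA) mod q" "x < YA"
  using sigc_ABp[OF assms] unfolding blkc_def posc_def by auto

lemma kBA: assumes "XA \<le> x" "y < YA" "x < P0"
  shows "blkc (fst (sigc x y)) (snd (sigc x y)) = LA (y div p) (YA + (x - XA))"
    "posc (fst (sigc x y)) (snd (sigc x y)) = y mod p"
  using sigc_BA[OF assms] unfolding blkc_def posc_def isidc_def by auto

lemma kID: assumes "x < XA" "YA \<le> y" "\<not> pr (x div p) ((y - YA) div q)"
  shows "blkc (fst (sigc x y)) (snd (sigc x y)) = LId (x div p) ((y - YA) div q)"
    "posc (fst (sigc x y)) (snd (sigc x y)) = x mod p * q + (y - YA) mod q"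
  using sigc_id[OF assms] assms unfolding blkc_def posc_def isidc_def by auto

lemma fid: assumes f: "f \<in> dimdrop p q" and "a < p" "a' < p" "b < q" "b' < q"
  shows "f 1 (a*q+b) (a'*q+b') = (if a = a' then 1 else 0) * f 1 b b'"
proof -
  have "a*q+b < p*q" "a'*q+b' < p*q" using enc_lt assms by (auto simp: mult.commute)
  from f1_form[OF f this] show ?thesis using assms by simp
qed

lemma exb: "XA \<le> x \<Longrightarrow> XA \<le> x' \<Longrightarrow> (x = x') = ((x - XA) div q = (x' - XA) div q \<and> (x - XA) mod q = (x' - XA) mod q)"
  by (metis divmod_eq_iff le_add_diff_inverse)

lemma exa: "(x = x') = (x div p = x' div p \<and> x mod p = x' mod p)"
  by (rule divmod_eq_iff)

lemma t1c: assumes f: "f \<in> dimdrop p q" and xy: "x < P0" "y < P1" "x' < P0" "y' < P1"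
  shows "BC f 1 (sigc x y) (sigc x' y') = (if x = x' then 1 else 0) * Bt f y y'"
proof -
  consider (AA) "x < XA" "y < YA" | (BB) "XA \<le> x" "YA \<le> y" | (ABp) "x < XA" "YA \<le> y" "pr (x div p) ((y - YA) div q)"
    | (BA) "XA \<le> x" "y < YA" | (ID) "x < XA" "YA \<le> y" "\<not> pr (x div p) ((y - YA) div q)" by linarith
  then show ?thesis
  proof cases
    case AA
    note a = AA
    consider (AA) "x' < XA" "y' < YA" | (BB) "XA \<le> x'" "YA \<le> y'" | (ABp) "x' < XA" "YA \<le> y'" "pr (x' div p) ((y' - YA) div q)"
      | (BA) "XA \<le> x'" "y' < YA" | (ID) "x' < XA" "YA \<le> y'" "\<not> pr (x' div p) ((y' - YA) div q)" by linarith
    then show ?thesis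
    proof cases
      case AA
      note b = AA
      show ?thesis using a b kAA[OF a(1) a(2)] kAA[OF b(1) b(2)] mlt xy exa[of x x']
        by (cases "x = x'") (auto simp: BC_def Fm_def Bt_def enc_inj fid[OF f] pr_def)
    next
      case BB
      note b = BB
      show ?thesis using a b kAA[OF a(1) a(2)] kBB[OF b(1) b(2) xy(3) xy(4)] mlt xy
        by (cases "x = x'") (auto simp: BC_def Fm_def Bt_def enc_inj fid[OF f] pr_def)
    next
      case ABp
      note b = ABp
      show ?thesis using a b kAA[OF a(1) a(2)] kABp[OF b(1) b(2) b(3)] mlt xy
        by (cases "x = x'") (auto simp: BC_def Fm_def Bt_def enc_inj fid[OF f] pr_def)
    next
      case BA
      note b = BA
      show ?thesis using a b kAA[OF a(1) a(2)] kBA[OF b(1) b(2) xy(3)] mlt xy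
        by (cases "x = x'") (auto simp: BC_def Fm_def Bt_def enc_inj fid[OF f] pr_def)
    next
      case ID
      note b = ID
      show ?thesis using a b kAA[OF a(1) a(2)] kID[OF b(1) b(2) b(3)] mlt xy
        by (cases "x = x'") (auto simp: BC_def Fm_def Bt_def enc_inj fid[OF f] pr_def)
    qed
  next
    case BB
    note a = BB
    consider (AA) "x' < XA" "y' < YA" | (BB) "XA \<le> x'" "YA \<le> y'" | (ABp) "x' < XA" "YA \<le> y'" "pr (x' div p) ((y' - YA) div q)"
      | (BA) "XA \<le> x'" "y' < YA" | (ID) "x' < XA" "YA \<le> y'" "\<not> pr (x' div p) ((y' - YA) div q)" by linarith
    then show ?thesis
    proof cases
      case AA
      note b = AA
      show ?thesis using a b kBB[OF a(1) a(2) xy(1) xy(2)] kAA[OF b(1) b(2)] mlt xy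
        by (cases "x = x'") (auto simp: BC_def Fm_def Bt_def enc_inj fid[OF f] pr_def)
    next
      case BB
      note b = BB
      show ?thesis using a b kBB[OF a(1) a(2) xy(1) xy(2)] kBB[OF b(1) b(2) xy(3) xy(4)] mlt xy exb[of x x']
        by (cases "x = x'") (auto simp: BC_def Fm_def Bt_def enc_inj fid[OF f] pr_def)
    next
      case ABp
      note b = ABp
      show ?thesis using a b kBB[OF a(1) a(2) xy(1) xy(2)] kABp[OF b(1) b(2) b(3)] mlt xy
        by (cases "x = x'") (auto simp: BC_def Fm_def Bt_def enc_inj fid[OF f] pr_def)
    next
      case BA
      note b = BA
      show ?thesis using a b kBB[OF a(1) a(2) xy(1) xy(2)] kBA[OF b(1) b(2) xy(3)] mlt xy
        by (cases "x = x'") (auto simp: BC_def Fm_def Bt_def enc_inj fid[OF f] pr_def)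
    next
      case ID
      note b = ID
      show ?thesis using a b kBB[OF a(1) a(2) xy(1) xy(2)] kID[OF b(1) b(2) b(3)] mlt xy
        by (cases "x = x'") (auto simp: BC_def Fm_def Bt_def enc_inj fid[OF f] pr_def)
    qed
  next
    case ABp
    note a = ABp
    consider (AA) "x' < XA" "y' < YA" | (BB) "XA \<le> x'" "YA \<le> y'" | (ABp) "x' < XA" "YA \<le> y'" "pr (x' div p) ((y' - YA) div q)"
      | (BA) "XA \<le> x'" "y' < YA" | (ID) "x' < XA" "YA \<le> y'" "\<not> pr (x' div p) ((y' - YA) div q)" by linarith
    then show ?thesis
    proof cases
      case AA
      note b = AA
      show ?thesis using a b kABp[OF a(1) a(2) a(3)] kAA[OF b(1) b(2)] mlt xy
        by (cases "x = x'") (auto simp: BC_def Fm_def Bt_def enc_inj fid[OF f] pr_def)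
    next
      case BB
      note b = BB
      show ?thesis using a b kABp[OF a(1) a(2) a(3)] kBB[OF b(1) b(2) xy(3) xy(4)] mlt xy
        by (cases "x = x'") (auto simp: BC_def Fm_def Bt_def enc_inj fid[OF f] pr_def)
    next
      case ABp
      note b = ABp
      show ?thesis using a b kABp[OF a(1) a(2) a(3)] kABp[OF b(1) b(2) b(3)] mlt xy
        by (cases "x = x'") (auto simp: BC_def Fm_def Bt_def enc_inj fid[OF f] pr_def)
    next
      case BA
      note b = BA
      show ?thesis using a b kABp[OF a(1) a(2) a(3)] kBA[OF b(1) b(2) xy(3)] mlt xy
        by (cases "x = x'") (auto simp: BC_def Fm_def Bt_def enc_inj fid[OF f] pr_def)
    next
      case ID
      note b = ID
      show ?thesis using a b kABp[OF a(1) a(2) a(3)] kID[OF b(1) b(2) b(3)] mlt xy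
        by (cases "x = x'") (auto simp: BC_def Fm_def Bt_def enc_inj fid[OF f] pr_def)
    qed
  next
    case BA
    note a = BA
    consider (AA) "x' < XA" "y' < YA" | (BB) "XA \<le> x'" "YA \<le> y'" | (ABp) "x' < XA" "YA \<le> y'" "pr (x' div p) ((y' - YA) div q)"
      | (BA) "XA \<le> x'" "y' < YA" | (ID) "x' < XA" "YA \<le> y'" "\<not> pr (x' div p) ((y' - YA) div q)" by linarith
    then show ?thesis
    proof cases
      case AA
      note b = AA
      show ?thesis using a b kBA[OF a(1) a(2) xy(1)] kAA[OF b(1) b(2)] mlt xy
        by (cases "x = x'") (auto simp: BC_def Fm_def Bt_def enc_inj fid[OF f] pr_def)
    next
      case BB
      note b = BB
      show ?thesis using a b kBA[OF a(1) a(2) xy(1)] kBB[OF b(1) b(2) xy(3) xy(4)] mlt xy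
        by (cases "x = x'") (auto simp: BC_def Fm_def Bt_def enc_inj fid[OF f] pr_def)
    next
      case ABp
      note b = ABp
      show ?thesis using a b kBA[OF a(1) a(2) xy(1)] kABp[OF b(1) b(2) b(3)] mlt xy
        by (cases "x = x'") (auto simp: BC_def Fm_def Bt_def enc_inj fid[OF f] pr_def)
    next
      case BA
      note b = BA
      show ?thesis using a b kBA[OF a(1) a(2) xy(1)] kBA[OF b(1) b(2) xy(3)] mlt xy
        by (cases "x = x'") (auto simp: BC_def Fm_def Bt_def enc_inj fid[OF f] pr_def)
    next
      case ID
      note b = ID
      show ?thesis using a b kBA[OF a(1) a(2) xy(1)] kID[OF b(1) b(2) b(3)] mlt xy
        by (cases "x = x'") (auto simp: BC_def Fm_def Bt_def enc_inj fid[OF f] pr_def)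
    qed
  next
    case ID
    note a = ID
    consider (AA) "x' < XA" "y' < YA" | (BB) "XA \<le> x'" "YA \<le> y'" | (ABp) "x' < XA" "YA \<le> y'" "pr (x' div p) ((y' - YA) div q)"
      | (BA) "XA \<le> x'" "y' < YA" | (ID) "x' < XA" "YA \<le> y'" "\<not> pr (x' div p) ((y' - YA) div q)" by linarith
    then show ?thesis
    proof cases
      case AA
      note b = AA
      show ?thesis using a b kID[OF a(1) a(2) a(3)] kAA[OF b(1) b(2)] mlt xy
        by (cases "x = x'") (auto simp: BC_def Fm_def Bt_def enc_inj fid[OF f] pr_def)
    next
      case BB
      note b = BB
      show ?thesis using a b kID[OF a(1) a(2) a(3)] kBB[OF b(1) b(2) xy(3) xy(4)] mlt xy
        by (cases "x = x'") (auto simp: BC_def Fm_def Bt_def enc_inj fid[OF f] pr_def)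
    next
      case ABp
      note b = ABp
      show ?thesis using a b kID[OF a(1) a(2) a(3)] kABp[OF b(1) b(2) b(3)] mlt xy
        by (cases "x = x'") (auto simp: BC_def Fm_def Bt_def enc_inj fid[OF f] pr_def)
    next
      case BA
      note b = BA
      show ?thesis using a b kID[OF a(1) a(2) a(3)] kBA[OF b(1) b(2) xy(3)] mlt xy
        by (cases "x = x'") (auto simp: BC_def Fm_def Bt_def enc_inj fid[OF f] pr_def)
    next
      case ID
      note b = ID
      show ?thesis using a b kID[OF a(1) a(2) a(3)] kID[OF b(1) b(2) b(3)] mlt xy exa[of x x']
        by (cases "x = x'") (auto simp: BC_def Fm_def Bt_def enc_inj fid[OF f] pr_def)
    qed
  qed
qed

definition At :: "matfun \<Rightarrow> nat \<Rightarrow> nat \<Rightarrow> complex" where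
  "At f x x' = (if x < XA \<and> x' < XA \<and> x div p = x' div p then f 0 (x mod p * q) (x' mod p * q)
     else if XA \<le> x \<and> XA \<le> x' \<and> (x - XA) div q = (x' - XA) div q then f 1 ((x - XA) mod q) ((x' - XA) mod q) else 0)"

lemma f0id: assumes f: "f \<in> dimdrop p q" and "a < p" "a' < p" "b < q" "b' < q"
  shows "f 0 (a*q+b) (a'*q+b') = f 0 (a*q) (a'*q) * (if b = b' then 1 else 0)"
proof -
  have "a*q+b < p*q" "a'*q+b' < p*q" using enc_lt assms by (auto simp: mult.commute)
  from f0_form[OF f this] show ?thesis using assms by simp
qed

lemma eyb: "YA \<le> y \<Longrightarrow> YA \<le> y' \<Longrightarrow> (y = y') = ((y - YA) div q = (y' - YA) div q \<and> (y - YA) mod q = (y' - YA) mod q)"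
  by (metis divmod_eq_iff le_add_diff_inverse)

lemma kAid: "x < XA \<Longrightarrow> isidc (x div p) y \<Longrightarrow> blkc x y = LId (x div p) ((y - YA) div q) \<and> posc x y = x mod p * q + (y - YA) mod q"
  unfolding blkc_def posc_def by simp
lemma kAn: "x < XA \<Longrightarrow> \<not> isidc (x div p) y \<Longrightarrow> blkc x y = LA (x div p) y \<and> posc x y = x mod p"
  unfolding blkc_def posc_def by simp
lemma kB: "XA \<le> x \<Longrightarrow> blkc x y = LB ((x - XA) div q) y \<and> posc x y = (x - XA) mod q"
  unfolding blkc_def posc_def by simp

lemma t0c: assumes f: "f \<in> dimdrop p q" and xy: "x < P0" "y < P1" "x' < P0" "y' < P1"
  shows "BC f 0 (x, y) (x', y') = At f x x' * (if y = y' then 1 else 0)"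
proof -
  consider (Aid) "x < XA" "isidc (x div p) y" | (An) "x < XA" "\<not> isidc (x div p) y" | (B) "XA \<le> x" by linarith
  then show ?thesis
  proof cases
    case Aid
    note a = Aid
    consider (Aid) "x' < XA" "isidc (x' div p) y'" | (An) "x' < XA" "\<not> isidc (x' div p) y'" | (B) "XA \<le> x'" by linarith
    then show ?thesis
    proof cases
      case Aid
      note b = Aid
      show ?thesis using a b kAid[OF a(1) a(2)] kAid[OF b(1) b(2)] mlt xy eyb[of y y'] exa[of x x'] isidc_def
        by (cases "y = y'") (auto simp: BC_def Fm_def At_def enc_inj f0id[OF f])
    next
      case An
      note b = An
      show ?thesis using a b kAid[OF a(1) a(2)] kAn[OF b(1) b(2)] mlt xy isidc_def
        by (cases "y = y'") (auto simp: BC_def Fm_def At_def enc_inj f0id[OF f])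
    next
      case B
      note b = B
      show ?thesis using a b kAid[OF a(1) a(2)] kB[OF b(1)] mlt xy
        by (cases "y = y'") (auto simp: BC_def Fm_def At_def enc_inj f0id[OF f])
    qed
  next
    case An
    note a = An
    consider (Aid) "x' < XA" "isidc (x' div p) y'" | (An) "x' < XA" "\<not> isidc (x' div p) y'" | (B) "XA \<le> x'" by linarith
    then show ?thesis
    proof cases
      case Aid
      note b = Aid
      show ?thesis using a b kAn[OF a(1) a(2)] kAid[OF b(1) b(2)] mlt xy isidc_def
        by (cases "y = y'") (auto simp: BC_def Fm_def At_def enc_inj f0id[OF f])
    next
      case An
      note b = An
      show ?thesis using a b kAn[OF a(1) a(2)] kAn[OF b(1) b(2)] mlt xy exa[of x x'] isidc_def
        by (cases "y = y'") (auto simp: BC_def Fm_def At_def enc_inj f0id[OF f])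
    next
      case B
      note b = B
      show ?thesis using a b kAn[OF a(1) a(2)] kB[OF b(1)] mlt xy
        by (cases "y = y'") (auto simp: BC_def Fm_def At_def enc_inj f0id[OF f])
    qed
  next
    case B
    note a = B
    consider (Aid) "x' < XA" "isidc (x' div p) y'" | (An) "x' < XA" "\<not> isidc (x' div p) y'" | (B) "XA \<le> x'" by linarith
    then show ?thesis
    proof cases
      case Aid
      note b = Aid
      show ?thesis using a b kB[OF a(1)] kAid[OF b(1) b(2)] mlt xy
        by (cases "y = y'") (auto simp: BC_def Fm_def At_def enc_inj f0id[OF f])
    next
      case An
      note b = An
      show ?thesis using a b kB[OF a(1)] kAn[OF b(1) b(2)] mlt xy
        by (cases "y = y'") (auto simp: BC_def Fm_def At_def enc_inj f0id[OF f])
    next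
      case B
      note b = B
      show ?thesis using a b kB[OF a(1)] kB[OF b(1)] mlt xy exb[of x x']
        by (cases "y = y'") (auto simp: BC_def Fm_def At_def enc_inj f0id[OF f])
    qed
  qed
qed

end


lemma half: fixes p q P :: nat
  assumes "0 < p" "0 < q" "coprime p q" "2*p*q \<le> P"
  shows "\<exists>x y. P = x*p + y*q \<and> x < q \<and> p < y"
proof -
  obtain v where v: "[p * v = Suc 0] (mod q)" using cong_solve_coprime_nat[OF assms(3)] by auto
  define x where "x = (v * P) mod q"
  have xq: "x < q" using assms(2) x_def by simp
  have "[x = v * P] (mod q)" unfolding x_def cong_def by simp
  then have "[x * p = v * P * p] (mod q)" by (rule cong_scalar_right)
  moreover have "[p * v * P = Suc 0 * P] (mod q)" using v by (rule cong_scalar_right)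
  ultimately have c: "[x * p = P] (mod q)" by (simp add: cong_def mult.commute mult.left_commute)
  have a: "x * p < p * q" using xq assms(1) by (simp add: mult.commute)
  have b: "2*(p*q) \<le> P" using assms(4) by (simp add: mult.assoc)
  have le: "x * p < P - p*q" using a b by linarith
  then have "q dvd P - x*p" using c mod_eq_dvd_iff_nat[of "x*p" P q] unfolding cong_def by simp
  then obtain y where y: "P - x*p = q * y" by (auto elim: dvdE)
  have P: "P = x*p + y*q" using y le by (simp add: mult.commute)
  have "p * q < q * y" using y le by linarith
  then have "q * p < q * y" by (simp add: mult.commute)
  then have "p < y" by simp
  then show ?thesis using P xq by blast
qed

context cons begin

definition phi :: "matfun \<Rightarrow> matfun" where
  "phi f = (\<lambda>t i j. if t \<in> {0..1} \<and> i < N \<and> j < N then Cj N sg t (BM f t) i j else 0)"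

lemma inv: "\<And>i. i < N \<Longrightarrow> sg i < N \<and> sg (sg i) = i" using sg_inv by blast

lemma Cj_cong: "(\<And>a b. a<n \<Longrightarrow> b<n \<Longrightarrow> M a b = M' a b) \<Longrightarrow> i < n \<Longrightarrow> j < n \<Longrightarrow> Cj n s t M i j = Cj n s t M' i j"
  unfolding Cj_def by (intro mm_cong refl) auto

lemma BM_BC: "BM f t i j = BC f t (i div P1, i mod P1) (j div P1, j mod P1)"
  unfolding BM_def BC_def blk_def pos_def by simp

lemma BM_sg: "i < N \<Longrightarrow> j < N \<Longrightarrow> BM f t (sg i) (sg j) = BC f t (sigc (i div P1) (i mod P1)) (sigc (j div P1) (j mod P1))"
  unfolding BM_def BC_def using blk_sg pos_sg by simp

lemma phi_in: assumes f: "f \<in> dimdrop p q" shows "phi f \<in> dimdrop P0 P1"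
proof -
  have cont: "continuous_on {0..1} (\<lambda>t. phi f t i j)" for i j
  proof (cases "i < N \<and> j < N")
    case True
    have "continuous_on {0..1} (\<lambda>t. Cj N sg t (BM f t) i j)"
      by (rule Cj_cont) (rule BM_cont[OF f])
    then show ?thesis by (rule continuous_on_cong[THEN iffD1, rotated 2]) (auto simp: phi_def True)
  next
    case False
    then have "(\<lambda>t. phi f t i j) = (\<lambda>t. 0)" by (auto simp: phi_def)
    then show ?thesis by (metis continuous_on_const)
  qed
  have zero: "\<forall>t i j. (t \<notin> {0..1} \<or> P0*P1 \<le> i \<or> P0*P1 \<le> j) \<longrightarrow> phi f t i j = 0"
    by (auto simp: phi_def)
  have t0: "in_Mp_tensor_1q P0 P1 (phi f 0)"
    unfolding in_Mp_tensor_1q_def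
  proof (intro exI[of _ "At f"] allI impI)
    fix i j assume ij: "i < P0*P1" "j < P0*P1"
    have "phi f 0 i j = BM f 0 i j" using ij Cj_0 by (simp add: phi_def)
    also have "\<dots> = At f (i div P1) (j div P1) * (if i mod P1 = j mod P1 then 1 else 0)"
      unfolding BM_BC using t0c[OF f] coord ij by simp
    finally show "phi f 0 i j = At f (i div P1) (j div P1) * (if i mod P1 = j mod P1 then 1 else 0)" .
  qed
  have t1: "in_1p_tensor_Mq P0 P1 (phi f 1)"
    unfolding in_1p_tensor_Mq_def
  proof (intro exI[of _ "Bt f"] allI impI)
    fix i j assume ij: "i < P0*P1" "j < P0*P1"
    have "phi f 1 i j = BM f 1 (sg i) (sg j)" using ij Cj_1[OF inv] by (simp add: phi_def)
    also have "\<dots> = (if i div P1 = j div P1 then 1 else 0) * Bt f (i mod P1) (j mod P1)"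
      unfolding BM_sg[OF ij] using t1c[OF f] coord ij by simp
    finally show "phi f 1 i j = (if i div P1 = j div P1 then 1 else 0) * Bt f (i mod P1) (j mod P1)" .
  qed
  show ?thesis unfolding dimdrop_def using cont zero t0 t1 by auto
qed

lemma phi_add: "phi (mf_add f g) = mf_add (phi f) (phi g)"
proof (intro ext)
  fix t i j
  have "mf_add (phi f) (phi g) t i j = phi f t i j + phi g t i j" by (simp add: mf_add_def)
  then show "phi (mf_add f g) t i j = mf_add (phi f) (phi g) t i j"
    unfolding phi_def BM_add by (simp add: Cj_add)
qed

lemma phi_scale: "phi (mf_scale c f) = mf_scale c (phi f)"
proof (intro ext)
  fix t i j
  have "mf_scale c (phi f) t i j = c * phi f t i j" by (simp add: mf_scale_def)
  then show "phi (mf_scale c f) t i j = mf_scale c (phi f) t i j"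
    unfolding phi_def BM_scale by (simp add: Cj_scale)
qed

lemma phi_star: "phi (mf_star f) = mf_star (phi f)"
proof (intro ext)
  fix t i j
  have "BM (mf_star f) t = ct (BM f t)" unfolding ct_def by (auto intro!: ext simp: BM_star)
  then show "phi (mf_star f) t i j = mf_star (phi f) t i j"
  proof -
    have "mf_star (phi f) t i j = cnj (phi f t j i)" by (simp add: mf_star_def)
    moreover have "Cj N sg t (ct (BM f t)) i j = cnj (Cj N sg t (BM f t) j i)"
      unfolding Cj_ct by (simp add: ct_def)
    ultimately show ?thesis unfolding phi_def \<open>BM (mf_star f) t = ct (BM f t)\<close> by auto
  qed
qed

lemma phi_unit: "phi (mf_unit (p*q)) = mf_unit N"
proof (intro ext)
  fix t i j
  show "phi (mf_unit (p*q)) t i j = mf_unit N t i j"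
  proof (cases "t \<in> {0..1} \<and> i < N \<and> j < N")
    case True
    then have "Cj N sg t (BM (mf_unit (p*q)) t) i j = (if i = j then 1 else 0)"
      by (intro Cj_id[OF inv]) (auto simp: BM_unit)
    then show ?thesis using True by (simp add: phi_def mf_unit_def)
  next
    case False
    then show ?thesis by (auto simp: phi_def mf_unit_def)
  qed
qed

lemma phi_mult: assumes f: "f \<in> dimdrop p q" and g: "g \<in> dimdrop p q"
  shows "phi (mf_mult (p*q) f g) = mf_mult N (phi f) (phi g)"
proof (intro ext)
  fix t i j
  show "phi (mf_mult (p*q) f g) t i j = mf_mult N (phi f) (phi g) t i j"
  proof (cases "t \<in> {0..1} \<and> i < N \<and> j < N")
    case True
    have "phi (mf_mult (p*q) f g) t i j = Cj N sg t (mm N (BM f t) (BM g t)) i j"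
      using True by (simp add: phi_def Cj_cong[OF BM_mult[OF f g]])
    also have "\<dots> = mm N (Cj N sg t (BM f t)) (Cj N sg t (BM g t)) i j"
      by (simp add: Cj_mult[OF inv])
    also have "\<dots> = mf_mult N (phi f) (phi g) t i j"
      unfolding mm_def mf_mult_def phi_def using True by (intro sum.cong) auto
    finally show ?thesis .
  next
    case False
    then show ?thesis by (auto simp: phi_def mf_mult_def)
  qed
qed

lemma phi_inj: "inj_on phi (dimdrop p q)"
proof (rule inj_onI)
  fix f g assume f: "f \<in> dimdrop p q" and g: "g \<in> dimdrop p q" and e: "phi f = phi g"
  show "f = g"
  proof (intro ext)
    fix t u v
    show "f t u v = g t u v"
    proof (cases "t \<in> {0..1} \<and> u < p*q \<and> v < p*q")
      case True
      then have t: "t \<in> {0..1}" and uv: "u < p*q" "v < p*q" by auto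
      have BMeq: "BM f t i j = BM g t i j" if ij: "i < N" "j < N" for i j
      proof -
        have C: "Cj N sg t (BM f t) a b = Cj N sg t (BM g t) a b" if "a < N" "b < N" for a b
          using fun_cong[OF fun_cong[OF fun_cong[OF e, of t], of a], of b] that t by (simp add: phi_def)
        have "BM f t i j = mm N (mm N (Ws sg t) (Cj N sg t (BM f t))) (Wm sg t) i j"
          using Cj_inv[OF inv ij] by simp
        also have "\<dots> = mm N (mm N (Ws sg t) (Cj N sg t (BM g t))) (Wm sg t) i j"
          by (intro mm_cong refl ij) (simp_all add: C)
        also have "\<dots> = BM g t i j" using Cj_inv[OF inv ij] by simp
        finally show ?thesis .
      qed
      define c0 where "c0 = x0 - 1"
      have c0: "c0 < x0" "\<not> c0 < x1" using x1x0 c0_def by auto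
      define gi where "gi w = (c0*p + w div q)*P1 + (YA + w mod q)" for w
      have key: "gi w < N \<and> blk (gi w) = LId c0 0 \<and> pos (gi w) = w" if w: "w < p*q" for w
      proof -
        have X: "c0*p + w div q < XA" using enc_lt[of c0 x0 "w div q" p] c0 w q
          by (simp add: less_mult_imp_div_less mult.commute)
        have Y: "YA + w mod q < P1"
        proof -
          have "q \<le> y1*q" using y0y1 by simp
          moreover have "w mod q < q" using q by simp
          ultimately show ?thesis using P1 by linarith
        qed
        have isd: "isidc c0 (YA + w mod q)" using c0 q unfolding isidc_def pr_def by simp
        have "gi w < N" unfolding gi_def using X Y P0 by (intro enc_N) auto
        moreover have "blk (gi w) = LId c0 0" "pos (gi w) = w"
        proof -
          have wd: "w div q < p" using w by (simp add: less_mult_imp_div_less)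
          have wq: "w div q * q + w mod q = w" by simp
          show "blk (gi w) = LId c0 0" "pos (gi w) = w"
            using X Y isd p q wd wq unfolding gi_def blk_def blkc_def pos_def posc_def by auto
        qed
        ultimately show ?thesis by simp
      qed
      have "f t u v = BM f t (gi u) (gi v)" using key[OF uv(1)] key[OF uv(2)] by (simp add: BM_def Fm_def)
      also have "\<dots> = BM g t (gi u) (gi v)" using key uv BMeq by simp
      also have "\<dots> = g t u v" using key[OF uv(1)] key[OF uv(2)] by (simp add: BM_def Fm_def)
      finally show ?thesis .
    next
      case False
      then show ?thesis using f g unfolding dimdrop_def by auto
    qed
  qed
qed

lemma main: "unital_inj_star_hom p q P0 P1 phi"
  unfolding unital_inj_star_hom_def
  using phi_in phi_add phi_scale phi_mult phi_star phi_unit phi_inj by auto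

end

theorem lemma4p2:
  fixes p q P0 P1 :: nat
  assumes "0 < p" and "0 < q" and "coprime p q"
    and "0 < P0" and "0 < P1" and "coprime P0 P1"
    and "min P0 P1 \<ge> 2 * p * q"
  shows "\<exists>\<phi>. unital_inj_star_hom p q P0 P1 \<phi>"
proof -
  have c2: "coprime q p" using assms(3) by (simp add: coprime_commute)
  have h1: "2*p*q \<le> P1" using assms(7) by simp
  have h0: "2*q*p \<le> P0" using assms(7) by (simp add: mult.commute mult.left_commute)
  obtain x1 y1 where a1: "P1 = x1*p + y1*q" "x1 < q" "p < y1" using half[OF assms(1,2,3) h1] by blast
  obtain y0 x0 where a0: "P0 = y0*q + x0*p" "y0 < p" "q < x0" using half[OF assms(2,1) c2 h0] by blast
  interpret cons p q P0 P1 x0 y0 x1 y1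
    by unfold_locales (use assms a0 a1 in auto)
  show ?thesis using main by blast
qed

end
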